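(* Let $p,q$ be distributions on $\mathbb{R}$ and $\epsilon\in[0,1)$ such that $\sup_{t\in\mathbb{R}}|\mathbb{P}_{X\sim p}(X\ge t)-\mathbb{P}_{Y\sim q}(Y\ge t)|\le\epsilon$. Then there exist distributions $r_p\le\frac{p}{1-\epsilon}$ and $r_q\le\frac{q}{1-\epsilon}$ such that $r_p$ is stochastically dominated by $r_q$ (i.e. $\mathbb{P}_{r_p}(X\le t)\ge\mathbb{P}_{r_q}(X\le t)$ for all $t$); in particular $\mathbb{E}_{r_p}[X]\le\mathbb{E}_{r_q}[X]$ whenever these expectations exist.
   Context: For distributions $r,p$ and $\epsilon\in[0,1)$, $r\le\frac{p}{1-\epsilon}$ means $r$ is a probability distribution with $r(A)\le p(A)/(1-\epsilon)$ for all measurable $A$. *)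

theory Defs
  imports "HOL-Probability.Probability"
begin

definition real_distr :: "real measure \<Rightarrow> bool" where
  "real_distr M \<longleftrightarrow> prob_space M \<and> sets M = sets borel"

definition scaled_le :: "real measure \<Rightarrow> real measure \<Rightarrow> real \<Rightarrow> bool" where
  "scaled_le r p eps \<longleftrightarrow> real_distr r \<and>
     (\<forall>A \<in> sets borel. measure r A \<le> measure p A / (1 - eps))"

end

theory Submission
  imports Defs
begin

lemma layer_le:
  fixes M N :: "real measure" and f :: "real \<Rightarrow> real"
  assumes M: "real_distribution M" and N: "real_distribution N"
    and f[measurable]: "f \<in> borel_measurable borel"
    and le: "\<And>t. t \<ge> 0 \<Longrightarrow> emeasure M {x. t < f x} \<le> emeasure N {x. t < f x}"
  shows "(\<integral>\<^sup>+x. ennreal (f x) \<partial>M) \<le> (\<integral>\<^sup>+x. ennreal (f x) \<partial>N)"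
proof -
  interpret M: real_distribution M by fact
  interpret N: real_distribution N by fact
  have fM[measurable]: "f \<in> borel_measurable M" using f measurable_cong_sets by (simp add: measurable_def)
  have fN[measurable]: "f \<in> borel_measurable N" using f by (simp add: measurable_def)
  have lc: "(\<integral>\<^sup>+x. ennreal (f x) \<partial>K) = (\<integral>\<^sup>+t. (\<integral>\<^sup>+x. indicator {0..<f x} t \<partial>K) \<partial>lborel)"
    if K: "real_distribution K" for K
  proof -
    interpret K: real_distribution K by fact
    interpret P: pair_sigma_finite K lborel
      by (simp add: pair_sigma_finite_def K.sigma_finite_measure_axioms lborel.sigma_finite_measure_axioms)
    have ms: "(\<lambda>(x,t). indicator {0..<f x} t :: ennreal) \<in> borel_measurable (K \<Otimes>\<^sub>M lborel)"
    proof -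
      have "(\<lambda>(x,t). indicator {0..<f x} t :: ennreal) = (\<lambda>(x,t). if 0 \<le> t \<and> t < f x then 1 else 0)"
        by (auto simp: indicator_def fun_eq_iff)
      moreover have "f \<in> borel_measurable K" using f by (simp add: measurable_def)
      ultimately show ?thesis by simp
    qed
    have "(\<integral>\<^sup>+x. ennreal (f x) \<partial>K) = (\<integral>\<^sup>+x. (\<integral>\<^sup>+t. indicator {0..<f x} t \<partial>lborel) \<partial>K)"
    proof (rule nn_integral_cong)
      fix x
      show "ennreal (f x) = (\<integral>\<^sup>+t. indicator {0..<f x} t \<partial>lborel)"
        by (cases "0 \<le> f x") (auto simp: ennreal_neg)
    qed
    also have "\<dots> = (\<integral>\<^sup>+t. (\<integral>\<^sup>+x. indicator {0..<f x} t \<partial>K) \<partial>lborel)"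
      using P.Fubini'[OF ms] by simp
    finally show ?thesis .
  qed
  have inner: "(\<integral>\<^sup>+x. indicator {0..<f x} t \<partial>K) = indicator {0..} t * emeasure K {x. t < f x}"
    if K: "real_distribution K" for K t
  proof -
    interpret K: real_distribution K by fact
    have "(\<lambda>x. indicator {0..<f x} t :: ennreal) = (\<lambda>x. indicator {0..} t * indicator {x. t < f x} x)"
      by (auto simp: indicator_def fun_eq_iff)
    moreover have "{x. t < f x} \<in> sets K" using f by measurable
    ultimately show ?thesis by (simp add: nn_integral_cmult)
  qed
  show ?thesis
    unfolding lc[OF M] lc[OF N] inner[OF M] inner[OF N]
    by (intro nn_integral_mono) (auto simp: indicator_def le)
qed

lemma expect_le:
  fixes M N :: "real measure"
  assumes M: "real_distribution M" and N: "real_distribution N"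
    and le1: "\<And>t. measure M {..t} \<ge> measure N {..t}"
    and le2: "\<And>t. measure M {..<t} \<ge> measure N {..<t}"
    and iM: "integrable M (\<lambda>x. x)" and iN: "integrable N (\<lambda>x. x)"
  shows "(\<integral>x. x \<partial>M) \<le> (\<integral>x. x \<partial>N)"
proof -
  interpret M: real_distribution M by fact
  interpret N: real_distribution N by fact
  have A: "(\<integral>\<^sup>+x. ennreal x \<partial>M) \<le> (\<integral>\<^sup>+x. ennreal x \<partial>N)"
  proof (rule layer_le[OF M N, of "\<lambda>x. x", simplified])
    fix t :: real
    have "{x. t < x} = UNIV - {..t}" by auto
    then have "measure M {x. t < x} = 1 - measure M {..t}" "measure N {x. t < x} = 1 - measure N {..t}"
      using M.prob_compl N.prob_compl by auto
    then have "measure M {x. t < x} \<le> measure N {x. t < x}" using le1[of t] by simp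
    then show "emeasure M {x. t < x} \<le> emeasure N {x. t < x}"
      by (simp add: M.emeasure_eq_measure N.emeasure_eq_measure)
  qed
  have B: "(\<integral>\<^sup>+x. ennreal (- x) \<partial>N) \<le> (\<integral>\<^sup>+x. ennreal (- x) \<partial>M)"
  proof (rule layer_le[OF N M, of "\<lambda>x. - x", simplified])
    fix t :: real
    have "{x. t < - x} = {..< -t}" by auto
    then show "emeasure N {x. t < - x} \<le> emeasure M {x. t < - x}"
      using le2[of "-t"] by (simp add: M.emeasure_eq_measure N.emeasure_eq_measure)
  qed
  have fin: "(\<integral>\<^sup>+x. ennreal (g x) \<partial>K) < top" if "integrable K (\<lambda>x. x)" "\<And>x. g x \<le> \<bar>x\<bar>" for K and g :: "real \<Rightarrow> real"
  proof -
    have "(\<integral>\<^sup>+x. ennreal (g x) \<partial>K) \<le> (\<integral>\<^sup>+x. ennreal (norm x) \<partial>K)"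
      by (intro nn_integral_mono ennreal_leI) (simp add: that(2))
    also have "\<dots> < top" using that(1) by (simp add: integrable_iff_bounded)
    finally show ?thesis .
  qed
  have fN1: "(\<integral>\<^sup>+x. ennreal x \<partial>N) < top" using fin[OF iN, of "\<lambda>x. x"] by simp
  have fM2: "(\<integral>\<^sup>+x. ennreal (- x) \<partial>M) < top" using fin[OF iM, of "\<lambda>x. - x"] by simp
  show ?thesis
    unfolding real_lebesgue_integral_def[OF iM] real_lebesgue_integral_def[OF iN]
    using enn2real_mono[OF A fN1] enn2real_mono[OF B fM2] by linarith
qed

lemma trunc_lower:
  fixes p :: "real measure" and d :: real
  assumes p: "real_distribution p" and d0: "0 < d" and d1: "d \<le> 1"
  shows "\<exists>r. real_distribution r \<and> (\<forall>A\<in>sets borel. measure r A \<le> measure p A / d) \<and>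
     (\<forall>t. measure r {..<t} = min (measure p {..<t}) d / d) \<and>
     (\<forall>t. measure r {..t} = min (measure p {..t}) d / d)"
proof (cases "d = 1")
  case True
  interpret P: real_distribution p by fact
  show ?thesis
    by (rule exI[of _ p]) (simp add: True p P.prob_le_1 min_absorb1)
next
  case False
  with d1 have d1': "d < 1" by simp
  interpret P: real_distribution p by fact
  define S where "S = {x. d \<le> cdf p x}"
  have "eventually (\<lambda>x. cdf p x > d) at_top"
    using P.cdf_lim_at_top_prob d1' by (simp add: order_tendsto_iff)
  then obtain x0 where x0: "x0 \<in> S" unfolding S_def
    by (metis (mono_tags, lifting) eventually_at_top_linorder less_imp_le mem_Collect_eq order_refl)
  have "eventually (\<lambda>x. cdf p x < d) at_bot"
    using P.cdf_lim_at_bot d0 by (simp add: order_tendsto_iff)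
  then obtain b where b: "\<And>x. x \<le> b \<Longrightarrow> cdf p x < d"
    by (auto simp: eventually_at_bot_linorder)
  have bdd: "bdd_below S"
    unfolding S_def bdd_below_def using b by (metis linorder_not_less mem_Collect_eq nless_le)
  define a where "a = Inf S"
  have below: "cdf p x < d" if "x < a" for x
  proof (rule ccontr)
    assume "\<not> cdf p x < d"
    then have "x \<in> S" by (simp add: S_def)
    then have "a \<le> x" unfolding a_def using bdd by (rule cInf_lower)
    with that show False by simp
  qed
  have ca: "d \<le> cdf p a"
  proof -
    have ev: "eventually (\<lambda>x. d \<le> cdf p x) (at_right a)"
    proof (rule eventually_at_rightI[of a "a + 1"])
      fix x assume x: "x \<in> {a<..<a + 1}"
      then have "Inf S < x" by (simp add: a_def)
      then obtain s where s: "s \<in> S" "s < x" using cInf_lessD x0 by blast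
      then have "d \<le> cdf p s" by (simp add: S_def)
      also have "\<dots> \<le> cdf p x" using s by (intro P.cdf_nondecreasing) simp
      finally show "d \<le> cdf p x" .
    qed simp
    have "(cdf p \<longlongrightarrow> cdf p a) (at_right a)"
      using P.cdf_is_right_cont by (simp add: continuous_within)
    then show ?thesis using ev by (intro tendsto_lowerbound) auto
  qed
  have la: "measure p {..<a} \<le> d"
  proof -
    have "eventually (\<lambda>x. cdf p x \<le> d) (at_left a)"
      by (rule eventually_at_leftI[of "a - 1"]) (auto intro: less_imp_le below)
    then show ?thesis using P.cdf_at_left by (intro tendsto_upperbound) auto
  qed
  have split_a: "measure p {..a} = measure p {..<a} + measure p {a}"
  proof -
    have "{..a} = {..<a} \<union> {a}" by auto
    then show ?thesis using P.finite_measure_Union[of "{..<a}" "{a}"] by simp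
  qed
  define c where "c = (if measure p {a} = 0 then 0 else (d - measure p {..<a}) / measure p {a})"
  have c0: "0 \<le> c" using la by (simp add: c_def)
  have tot: "measure p {..<a} + c * measure p {a} = d"
  proof (cases "measure p {a} = 0")
    case True
    then show ?thesis using la ca split_a by (simp add: c_def cdf_def2)
  next
    case False
    then show ?thesis by (simp add: c_def)
  qed
  have c1: "c \<le> 1"
  proof (cases "measure p {a} = 0")
    case False
    then have "0 < measure p {a}" using measure_nonneg[of p "{a}"] by linarith
    moreover have "d - measure p {..<a} \<le> measure p {a}" using ca split_a by (simp add: cdf_def2)
    ultimately show ?thesis using False by (simp add: c_def)
  qed (simp add: c_def)
  define g where "g x = (indicator {..<a} x + c * indicator {a} x) / d" for x :: real
  define r where "r = density p (\<lambda>x. ennreal (g x))"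
  have gm[measurable]: "g \<in> borel_measurable p" unfolding g_def by simp
  have mr: "measure r A = (measure p (A \<inter> {..<a}) + c * measure p (A \<inter> {a})) / d"
    if A: "A \<in> sets borel" for A
  proof -
    define h where "h x = (indicator (A \<inter> {..<a}) x + c * indicator (A \<inter> {a}) x) / d" for x :: real
    have Ap: "A \<in> sets p" using A by simp
    have i1: "integrable p (indicator (A \<inter> {..<a}) :: real \<Rightarrow> real)"
      using Ap by (intro integrable_real_indicator) (auto simp: P.emeasure_eq_measure)
    have i2: "integrable p (indicator (A \<inter> {a}) :: real \<Rightarrow> real)"
      using Ap by (intro integrable_real_indicator) (auto simp: P.emeasure_eq_measure)
    have i3: "integrable p (\<lambda>x. indicator (A \<inter> {..<a}) x + c * indicator (A \<inter> {a}) x :: real)"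
      using i1 i2 by (auto intro!: Bochner_Integration.integrable_add)
    have hint: "integrable p h" unfolding h_def using i3
      by (intro integrable_divide) auto
    have hnn: "\<And>x. 0 \<le> h x" unfolding h_def using c0 d0 by (auto intro!: divide_nonneg_pos add_nonneg_nonneg)
    have ih: "integral\<^sup>L p h = (measure p (A \<inter> {..<a}) + c * measure p (A \<inter> {a})) / d"
    proof -
      have "integral\<^sup>L p h = integral\<^sup>L p (\<lambda>x. indicator (A \<inter> {..<a}) x + c * indicator (A \<inter> {a}) x) / d"
        unfolding h_def by (rule integral_divide_zero)
      also have "integral\<^sup>L p (\<lambda>x. indicator (A \<inter> {..<a}) x + c * indicator (A \<inter> {a}) x) =
          integral\<^sup>L p (indicator (A \<inter> {..<a}) :: real \<Rightarrow> real) + integral\<^sup>L p (\<lambda>x. c * indicator (A \<inter> {a}) x)"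
        using i1 i2 by (intro Bochner_Integration.integral_add) auto
      finally show ?thesis using Ap by (simp add: P.emeasure_eq_measure)
    qed
    have "emeasure r A = (\<integral>\<^sup>+x. ennreal (g x) * indicator A x \<partial>p)"
      unfolding r_def using Ap by (subst emeasure_density) auto
    also have "\<dots> = (\<integral>\<^sup>+x. ennreal (h x) \<partial>p)"
      by (intro nn_integral_cong) (simp add: g_def h_def split: split_indicator)
    also have "\<dots> = ennreal (integral\<^sup>L p h)"
      using hint hnn by (intro nn_integral_eq_integral) auto
    finally have "emeasure r A = ennreal (integral\<^sup>L p h)" .
    then have "measure r A = integral\<^sup>L p h"
      using hnn by (simp add: measure_def integral_nonneg)
    then show ?thesis using ih by simp
  qed
  have sr[simp]: "sets r = sets borel" by (simp add: r_def)
  have sp_r: "space r = UNIV" by (simp add: r_def)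
  have fin_r: "emeasure r UNIV \<noteq> top"
  proof -
    have "emeasure r UNIV = (\<integral>\<^sup>+x. ennreal (g x) \<partial>p)"
      unfolding r_def by (subst emeasure_density) auto
    also have "\<dots> \<le> (\<integral>\<^sup>+x. ennreal ((1 + c) / d) \<partial>p)"
      using c0 d0 unfolding g_def by (intro nn_integral_mono ennreal_leI divide_right_mono) (auto split: split_indicator)
    also have "\<dots> < top" using P.emeasure_space_1 by (simp add: ennreal_mult_less_top)
    finally show ?thesis by simp
  qed
  have mU: "measure r UNIV = 1"
    using mr[of UNIV] tot d0 by simp
  have rprob: "prob_space r"
  proof
    show "emeasure r (space r) = 1" using mU fin_r sp_r
      by (simp add: emeasure_eq_ennreal_measure)
  qed
  have rdist: "real_distribution r"
    using rprob by (simp add: real_distribution_def real_distribution_axioms_def)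
  show ?thesis
  proof (intro exI[of _ r] conjI ballI allI)
    show "real_distribution r" by fact
  next
    fix A :: "real set" assume A: "A \<in> sets borel"
    have "measure p (A \<inter> {..<a}) + c * measure p (A \<inter> {a}) \<le> measure p (A \<inter> {..<a}) + measure p (A \<inter> {a})"
      using c0 c1 by (intro add_left_mono mult_left_le_one_le) auto
    also have "\<dots> = measure p ((A \<inter> {..<a}) \<union> (A \<inter> {a}))"
      using A by (intro P.finite_measure_Union[symmetric]) auto
    also have "\<dots> \<le> measure p A" using A by (intro P.finite_measure_mono) auto
    finally show "measure r A \<le> measure p A / d" using mr[OF A] d0 by (simp add: divide_right_mono)
  next
    fix t :: real
    show "measure r {..<t} = min (measure p {..<t}) d / d"
    proof (cases "t \<le> a")
      case True
      then have e1: "{..<t} \<inter> {..<a} = {..<t}" and e2: "{..<t} \<inter> {a} = {}" by auto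
      have "measure p {..<t} \<le> measure p {..<a}" using True by (intro P.finite_measure_mono) auto
      then show ?thesis using mr[of "{..<t}"] e1 e2 la by simp
    next
      case False
      then have e1: "{..<t} \<inter> {..<a} = {..<a}" and e2: "{..<t} \<inter> {a} = {a}" by auto
      have "measure p {..a} \<le> measure p {..<t}" using False by (intro P.finite_measure_mono) auto
      then have "d \<le> measure p {..<t}" using ca by (simp add: cdf_def2)
      then show ?thesis using mr[of "{..<t}"] e1 e2 tot d0 by simp
    qed
  next
    fix t :: real
    show "measure r {..t} = min (measure p {..t}) d / d"
    proof (cases "t < a")
      case True
      then have e1: "{..t} \<inter> {..<a} = {..t}" and e2: "{..t} \<inter> {a} = {}" by auto
      have "measure p {..t} < d" using below[OF True] by (simp add: cdf_def2)
      then show ?thesis using mr[of "{..t}"] e1 e2 by simp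
    next
      case False
      then have e1: "{..t} \<inter> {..<a} = {..<a}" and e2: "{..t} \<inter> {a} = {a}" by auto
      have "measure p {..a} \<le> measure p {..t}" using False by (intro P.finite_measure_mono) auto
      then have "d \<le> measure p {..t}" using ca by (simp add: cdf_def2)
      then show ?thesis using mr[of "{..t}"] e1 e2 tot d0 by simp
    qed
  qed
qed

lemma real_distr_iff: "real_distr M \<longleftrightarrow> real_distribution M"
  by (simp add: real_distr_def real_distribution_def real_distribution_axioms_def)

lemma min_ineq:
  fixes x y d :: real
  assumes "0 < d" "d - min y d \<le> min x d"
  shows "1 - min y d / d \<le> min x d / d"
proof -
  have "1 - min y d / d = (d - min y d) / d" using assms(1) by (simp add: field_simps)
  also have "\<dots> \<le> min x d / d" using assms by (intro divide_right_mono) auto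
  finally show ?thesis .
qed

theorem lemma3p6:
  fixes p q :: "real measure" and eps :: real
  assumes "real_distr p" and "real_distr q"
    and "0 \<le> eps" and "eps < 1"
    and "(SUP t. \<bar>measure p {t..} - measure q {t..}\<bar>) \<le> eps"
  shows "\<exists>rp rq. scaled_le rp p eps \<and> scaled_le rq q eps \<and>
           (\<forall>t. measure rp {..t} \<ge> measure rq {..t}) \<and>
           (integrable rp (\<lambda>x. x) \<and> integrable rq (\<lambda>x. x) \<longrightarrow>
              (\<integral>x. x \<partial>rp) \<le> (\<integral>x. x \<partial>rq))"
proof -
  have pd: "real_distribution p" and qd: "real_distribution q"
    using assms(1,2) by (simp_all add: real_distr_iff)
  interpret P: real_distribution p by fact
  interpret Q: real_distribution q by fact
  define d where "d = 1 - eps"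
  have d0: "0 < d" and d1: "d \<le> 1" using assms(3,4) by (auto simp: d_def)
  have H1: "\<bar>measure p {t..} - measure q {t..}\<bar> \<le> eps" for t
  proof -
    have "bdd_above (range (\<lambda>t. \<bar>measure p {t..} - measure q {t..}\<bar>))"
    proof (rule bdd_aboveI2)
      fix t
      show "\<bar>measure p {t..} - measure q {t..}\<bar> \<le> 1"
        using P.prob_le_1[of "{t..}"] Q.prob_le_1[of "{t..}"]
          measure_nonneg[of p "{t..}"] measure_nonneg[of q "{t..}"] by linarith
    qed
    then have "\<bar>measure p {t..} - measure q {t..}\<bar> \<le> (SUP t. \<bar>measure p {t..} - measure q {t..}\<bar>)"
      by (intro cSUP_upper) auto
    then show ?thesis using assms(5) by linarith
  qed
  have lt: "measure M {..<s} = 1 - measure M {s..}" if "real_distribution M" for M s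
  proof -
    interpret M: real_distribution M by fact
    have "{..<s} = UNIV - {s..}" by auto
    then show ?thesis using M.prob_compl[of "{s..}"] by simp
  qed
  have H1': "\<bar>measure p {..<s} - measure q {..<s}\<bar> \<le> eps" for s
    using H1[of s] lt[OF pd, of s] lt[OF qd, of s] by simp
  have rlim: "((\<lambda>s. measure M {..<s}) \<longlongrightarrow> cdf M t) (at_right t)" if "real_distribution M" for M t
  proof -
    interpret M: real_distribution M by fact
    have c: "(cdf M \<longlongrightarrow> cdf M t) (at_right t)"
      using M.cdf_is_right_cont by (simp add: continuous_within)
    show ?thesis
    proof (rule tendsto_sandwich[OF _ _ tendsto_const c])
      show "eventually (\<lambda>s. cdf M t \<le> measure M {..<s}) (at_right t)"
        unfolding cdf_def2 by (rule eventually_at_rightI[of t "t+1"]) (auto intro!: M.finite_measure_mono)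
      show "eventually (\<lambda>s. measure M {..<s} \<le> cdf M s) (at_right t)"
        unfolding cdf_def2 by (rule always_eventually) (auto intro!: M.finite_measure_mono)
    qed
  qed
  have H2: "\<bar>measure p {..t} - measure q {..t}\<bar> \<le> eps" for t
  proof -
    have "((\<lambda>s. \<bar>measure p {..<s} - measure q {..<s}\<bar>) \<longlongrightarrow> \<bar>cdf p t - cdf q t\<bar>) (at_right t)"
      by (intro tendsto_intros rlim pd qd)
    then have "\<bar>cdf p t - cdf q t\<bar> \<le> eps"
      by (rule tendsto_upperbound) (auto intro: always_eventually H1')
    then show ?thesis by (simp add: cdf_def2)
  qed
  obtain rp where rp: "real_distribution rp" "\<forall>A\<in>sets borel. measure rp A \<le> measure p A / d"
     "\<forall>t. measure rp {..<t} = min (measure p {..<t}) d / d"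
     "\<forall>t. measure rp {..t} = min (measure p {..t}) d / d"
    using trunc_lower[OF pd d0 d1] by blast
  define q' where "q' = distr q borel uminus"
  have q'd: "real_distribution q'" unfolding q'_def by (intro Q.real_distribution_distr) simp
  have mq': "measure q' B = measure q (uminus -` B)" if "B \<in> sets borel" for B
    unfolding q'_def using that by (subst measure_distr) auto
  obtain r' where r': "real_distribution r'" "\<forall>A\<in>sets borel. measure r' A \<le> measure q' A / d"
     "\<forall>t. measure r' {..<t} = min (measure q' {..<t}) d / d"
     "\<forall>t. measure r' {..t} = min (measure q' {..t}) d / d"
    using trunc_lower[OF q'd d0 d1] by blast
  interpret R': real_distribution r' by fact
  define rq where "rq = distr r' borel uminus"
  have rqd: "real_distribution rq" unfolding rq_def by (intro R'.real_distribution_distr) simp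
  have mrq: "measure rq B = measure r' (uminus -` B)" if "B \<in> sets borel" for B
    unfolding rq_def using that by (subst measure_distr) auto
  have ub: "uminus -` B \<in> sets borel" if "B \<in> sets borel" for B :: "real set"
    using that by (intro measurable_sets_borel[OF _ that]) simp
  have rq_sc: "measure rq A \<le> measure q A / d" if A: "A \<in> sets borel" for A
  proof -
    have "measure rq A = measure r' (uminus -` A)" using mrq[OF A] .
    also have "\<dots> \<le> measure q' (uminus -` A) / d" using r'(2) ub[OF A] by blast
    also have "measure q' (uminus -` A) = measure q (uminus -` uminus -` A)" using mq'[OF ub[OF A]] .
    also have "uminus -` uminus -` A = A" by auto
    finally show ?thesis .
  qed
  have rq1: "measure rq {t..} = min (measure q {t..}) d / d" for t
  proof -
    have e: "uminus -` {t..} = {..-t}" "uminus -` {..-t} = {t..}" for t :: real by auto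
    show ?thesis using mrq[of "{t..}"] r'(4) mq'[of "{..-t}"] by (simp add: e)
  qed
  have rq2: "measure rq {t<..} = min (measure q {t<..}) d / d" for t
  proof -
    have e: "uminus -` {t<..} = {..<-t}" "uminus -` {..<-t} = {t<..}" for t :: real by auto
    show ?thesis using mrq[of "{t<..}"] r'(3) mq'[of "{..<-t}"] by (simp add: e)
  qed
  have le_compl: "measure M {..t} = 1 - measure M {t<..}" if "real_distribution M" for M t
  proof -
    interpret M: real_distribution M by fact
    have "{..t} = UNIV - {t<..}" by auto
    then show ?thesis using M.prob_compl[of "{t<..}"] by simp
  qed
  have D1: "measure rp {..t} \<ge> measure rq {..t}" for t
  proof -
    have "measure q {t<..} = 1 - measure q {..t}" using le_compl[OF qd, of t] by simp
    then have "d - min (measure q {t<..}) d \<le> min (measure p {..t}) d"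
      using H2[of t] measure_nonneg[of p "{..t}"] measure_nonneg[of q "{t<..}"]
      using assms(3,4) unfolding d_def by (auto simp: min_def)
    then have "1 - min (measure q {t<..}) d / d \<le> min (measure p {..t}) d / d"
      by (rule min_ineq[OF d0])
    then show ?thesis using rp(4) le_compl[OF rqd, of t] rq2[of t] by simp
  qed
  have D2: "measure rp {..<t} \<ge> measure rq {..<t}" for t
  proof -
    have "d - min (measure q {t..}) d \<le> min (measure p {..<t}) d"
      using H1[of t] lt[OF pd, of t] measure_nonneg[of p "{..<t}"] measure_nonneg[of q "{t..}"]
      using assms(3,4) unfolding d_def by (auto simp: min_def)
    then have "1 - min (measure q {t..}) d / d \<le> min (measure p {..<t}) d / d"
      by (rule min_ineq[OF d0])
    then show ?thesis using rp(3) lt[OF rqd, of t] rq1[of t] by simp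
  qed
  show ?thesis
  proof (rule exI[of _ rp], rule exI[of _ rq], intro conjI allI impI)
    show "scaled_le rp p eps" using rp(1,2) by (simp add: scaled_le_def real_distr_iff d_def)
  next
    show "scaled_le rq q eps" using rqd rq_sc by (simp add: scaled_le_def real_distr_iff d_def)
  next
    fix t show "measure rq {..t} \<le> measure rp {..t}" by (rule D1)
  next
    assume "integrable rp (\<lambda>x. x) \<and> integrable rq (\<lambda>x. x)"
    then show "(\<integral>x. x \<partial>rp) \<le> (\<integral>x. x \<partial>rq)"
      using expect_le[OF rp(1) rqd D1 D2] by blast
  qed
qed

end
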